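(* Let $q$ be a prime power with $q\equiv2\pmod 3$, let $m,n$ be positive integers, let $\omega\in\mathbb{F}_{q^2}$ be an element of multiplicative order $3$, and let $\varepsilon\in\mathbb{F}_q^*\cup\{\pm\omega,\pm\omega^2\}$. Put $f(x)=(x+\omega x^q)^m+\varepsilon(\omega x+x^q)^n$. Then: (i) if $\varepsilon\in\mathbb{F}_q^*$, $f$ permutes $\mathbb{F}_{q^2}$ if and only if $\gcd(mn,q-1)=1$ and $3\nmid(m-n)$; (ii) if $\varepsilon=\pm\omega$, $f$ permutes $\mathbb{F}_{q^2}$ if and only if $\gcd(mn,q-1)=1$ and $3\nmid(1+m-n)$; (iii) if $\varepsilon=\pm\omega^2$, $f$ permutes $\mathbb{F}_{q^2}$ if and only if $\gcd(mn,q-1)=1$ and $3\nmid(2+m-n)$.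
   Context: $f$ permutes $\mathbb{F}_{q^2}$ means the map $x\mapsto f(x)$ on $\mathbb{F}_{q^2}$ is bijective. *)

theory Defs
  imports "HOL-Computational_Algebra.Primes"
begin

(* F_q as the subfield {x. x^q = x} of a finite field with q^2 elements;
   F_q^* = its nonzero elements *)
definition subfield_q_star :: "nat \<Rightarrow> ('a::field) set" where
  "subfield_q_star q = {x. x ^ q = x \<and> x \<noteq> 0}"

definition permutes_field :: "('a \<Rightarrow> 'a) \<Rightarrow> bool" where
  "permutes_field f \<longleftrightarrow> bij f"

end

theory Submission
  imports Defs "HOL-Number_Theory.Cong" "HOL-Number_Theory.Residues" "HOL-Computational_Algebra.Polynomial"
begin


locale pctx =
  fixes q :: nat and w :: "'a::{field,finite}"
  assumes frob_add: "\<And>x y::'a. (x+y)^q = x^q + y^q"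
  and frob2: "\<And>x::'a. (x^q)^q = x"
  and qmod: "q mod 3 = 2"
  and w3: "w^3 = 1" and w1: "w \<noteq> 1"
  and three: "(3::'a) \<noteq> 0"
  and cardq: "card (UNIV::'a set) = q^2"
begin

definition F :: "'a set" where "F = {x. x^q = x}"

lemma q_ge2: "q \<ge> 2" using qmod by presburger
lemma q_pos: "q > 0" using q_ge2 by simp

lemma frob_neg: "(-(x::'a))^q = - (x^q)"
proof -
  have "(x + -x)^q = x^q + (-x)^q" by (rule frob_add)
  hence "x^q + (-x)^q = 0" using q_pos by (simp add: power_0_left)
  thus ?thesis by (metis neg_eq_iff_add_eq_0)
qed

lemma frob_diff: "((x::'a) - y)^q = x^q - y^q"
  using frob_add[of x "-y"] frob_neg[of y] by simp

lemma F_0[simp]: "0 \<in> F" using q_pos by (simp add: F_def)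
lemma F_1[simp]: "1 \<in> F" by (simp add: F_def)
lemma F_add: "a \<in> F \<Longrightarrow> b \<in> F \<Longrightarrow> a + b \<in> F" by (simp add: F_def frob_add)
lemma F_neg: "a \<in> F \<Longrightarrow> - a \<in> F" by (simp add: F_def frob_neg)
lemma F_diff: "a \<in> F \<Longrightarrow> b \<in> F \<Longrightarrow> a - b \<in> F" by (simp add: F_def frob_diff)
lemma F_mult: "a \<in> F \<Longrightarrow> b \<in> F \<Longrightarrow> a * b \<in> F" by (simp add: F_def power_mult_distrib)
lemma F_div: "a \<in> F \<Longrightarrow> b \<in> F \<Longrightarrow> a / b \<in> F" by (simp add: F_def power_divide)
lemma F_pow: "a \<in> F \<Longrightarrow> a ^ k \<in> F"
  by (simp add: F_def flip: power_mult) (metis mult.commute power_mult)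
lemma F_3: "(3::'a) \<in> F"
proof -
  have "(1::'a) + 1 + 1 \<in> F" by (intro F_add) auto
  thus ?thesis by (simp add: numeral_3_eq_3 algebra_simps)
qed
lemma F_2: "(2::'a) \<in> F"
proof -
  have "(1::'a) + 1 \<in> F" by (intro F_add) auto
  thus ?thesis by (simp add: one_add_one)
qed

lemma w_ne0: "w \<noteq> 0" using w3 by auto

lemma w_sq: "w^2 + w + 1 = 0"
proof -
  have "(w - 1) * (w^2 + w + 1) = w^3 - 1" by (simp add: algebra_simps power2_eq_square power3_eq_cube)
  also have "\<dots> = 0" using w3 by simp
  finally show ?thesis using w1 by simp
qed

lemma w_mod: "w ^ k = w ^ (k mod 3)"
proof -
  have "w ^ k = w ^ (3 * (k div 3) + k mod 3)" by simp
  also have "\<dots> = (w^3)^(k div 3) * w^(k mod 3)" by (metis power_add power_mult)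
  finally show ?thesis using w3 by simp
qed

lemma w2_ne_w: "w^2 \<noteq> w"
proof
  assume "w^2 = w"
  hence "w * w = w * 1" by (simp add: power2_eq_square)
  thus False using w_ne0 w1 by simp
qed

lemma w_in_F_iff: "w ^ j \<in> F \<longleftrightarrow> 3 dvd j"
proof -
  have "(w ^ j) ^ q = w ^ ((j * q) mod 3)" by (simp add: w_mod[of "j*q"] flip: power_mult)
  also have "(j * q) mod 3 = (2 * j) mod 3" using qmod by (metis mod_mult_right_eq mult.commute)
  finally have e: "(w ^ j) ^ q = w ^ ((2*j) mod 3)" .
  have "j mod 3 = 0 \<or> j mod 3 = 1 \<or> j mod 3 = 2" by presburger
  moreover {assume "j mod 3 = 0" hence "(2*j) mod 3 = 0" by presburger
    hence ?thesis using e \<open>j mod 3 = 0\<close> by (simp add: F_def w_mod[of j] dvd_eq_mod_eq_0)}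
  moreover {assume "j mod 3 = 1" hence "(2*j) mod 3 = 2" by presburger
    hence ?thesis using e \<open>j mod 3 = 1\<close> w2_ne_w by (simp add: F_def w_mod[of j] dvd_eq_mod_eq_0)}
  moreover {assume "j mod 3 = 2" hence "(2*j) mod 3 = 1" by presburger
    hence ?thesis using e \<open>j mod 3 = 2\<close> w2_ne_w by (auto simp add: F_def w_mod[of j] dvd_eq_mod_eq_0)}
  ultimately show ?thesis by metis
qed

lemma wq: "w ^ q = w^2" using w_mod[of q] qmod by simp
lemma w2q: "(w^2) ^ q = w"
proof -
  have "(w^2)^q = w^((2*q) mod 3)" by (simp add: w_mod[of "2*q"] flip: power_mult)
  also have "(2*q) mod 3 = 1" using qmod by presburger
  finally show ?thesis by simp
qed

lemma w_notin_F: "w \<notin> F" using w_in_F_iff[of 1] by simp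

definition Psi :: "'a \<times> 'a \<Rightarrow> 'a" where "Psi = (\<lambda>(a,b). a + b * w)"

lemma Psi_inj: "inj_on Psi (F \<times> F)"
proof (rule inj_onI, clarsimp simp: Psi_def)
  fix a b a' b' assume ab: "a \<in> F" "b \<in> F" "a' \<in> F" "b' \<in> F" and e: "a + b * w = a' + b' * w"
  show "a = a' \<and> b = b'"
  proof (cases "b = b'")
    case True thus ?thesis using e by simp
  next
    case False
    have "(b' - b) * w = a - a'" using e by (simp add: algebra_simps)
    hence "w = (a - a') / (b' - b)" using False by (simp add: eq_divide_eq mult.commute)
    hence "w \<in> F" using ab by (simp add: F_diff F_div)
    thus ?thesis using w_notin_F by simp
  qed
qed

lemma Psi_surj_pt: "(x::'a) \<in> Psi ` (F \<times> F)"
proof -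
  define b where "b = (x - x^q) / (w - w^2)"
  define a where "a = x - b * w"
  have d: "w - w^2 \<noteq> 0" using w2_ne_w by simp
  have bF: "b \<in> F"
  proof -
    have "b^q = (x^q - x) / (w^2 - w)"
      by (simp add: b_def power_divide frob_diff frob2 wq w2q)
    also have "\<dots> = b" unfolding b_def
      by (metis minus_diff_eq minus_divide_divide)
    finally show ?thesis by (simp add: F_def)
  qed
  have aF: "a \<in> F"
  proof -
    have "a^q = x^q - b * w^2" using bF by (simp add: a_def frob_diff power_mult_distrib wq F_def)
    also have "\<dots> = a"
    proof -
      have h: "b * (w - w^2) = x - x^q" using d by (simp add: b_def)
      hence "b * w - b * w^2 = x - x^q" by (simp add: right_diff_distrib)
      thus ?thesis by (simp add: a_def algebra_simps)
    qed
    finally show ?thesis by (simp add: F_def)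
  qed
  have "x = Psi (a, b)" by (simp add: Psi_def a_def)
  thus "x \<in> Psi ` (F \<times> F)" using aF bF by blast
qed

lemma Psi_surj: "Psi ` (F \<times> F) = UNIV"
  using Psi_surj_pt by blast

lemma Psi_bij: "bij_betw Psi (F \<times> F) UNIV"
  using Psi_inj Psi_surj by (simp add: bij_betw_def)

lemma card_F: "card F = q"
proof -
  have "card (F \<times> F) = card (UNIV :: 'a set)" using bij_betw_same_card[OF Psi_bij] .
  hence "card F * card F = q * q" using cardq by (simp add: card_cartesian_product power2_eq_square)
  show ?thesis
  proof (rule ccontr)
    assume "card F \<noteq> q"
    hence "card F < q \<or> q < card F" by arith
    thus False using \<open>card F * card F = q * q\<close> mult_strict_mono[of "card F" q "card F" q] mult_strict_mono[of q "card F" q "card F"]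
      by auto
  qed
qed

lemma finite_F: "finite F" by simp

end

context pctx begin

lemma pow_cycle: "u \<in> F \<Longrightarrow> u ^ (1 + t * (q - 1)) = u"
proof (induction t)
  case (Suc t)
  have "1 + Suc t * (q - 1) = q + t * (q - 1)" using q_pos by simp
  hence "u ^ (1 + Suc t * (q - 1)) = u^q * u^(t*(q-1))" by (simp add: power_add)
  also have "\<dots> = u * u^(t*(q-1))" using Suc.prems by (simp add: F_def)
  also have "\<dots> = u ^ (1 + t * (q - 1))" by (metis power_add power_one_right)
  also have "\<dots> = u" by (rule Suc.IH[OF Suc.prems])
  finally show ?case .
qed simp

lemma pow_inj:
  assumes "m > 0" "coprime m (q - 1)"
  shows "inj_on (\<lambda>u. u ^ m) F"
proof -
  obtain s where s: "[m * s = Suc 0] (mod (q - 1))" using cong_solve_coprime_nat[OF assms(2)] by blast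
  define s' where "s' = s + (q - 1)"
  have "[m * s' = m * s] (mod (q - 1))" unfolding s'_def cong_def
    by (simp add: distrib_left)
  hence c: "[m * s' = 1] (mod (q - 1))" using s by (metis One_nat_def cong_trans)
  have ge: "m * s' \<ge> 1" using assms(1) q_ge2 by (simp add: s'_def)
  then obtain t where t: "m * s' - 1 = (q - 1) * t" using c cong_altdef_nat by (metis dvdE)
  have e: "m * s' = 1 + t * (q - 1)"
  proof -
    have "m * s' = 1 + (m * s' - 1)" using ge by linarith
    thus ?thesis using t by (metis mult.commute)
  qed
  show ?thesis
  proof (rule inj_onI)
    fix u v assume uv: "u \<in> F" "v \<in> F" "u ^ m = v ^ m"
    have "u = u ^ (m * s')" using pow_cycle[OF uv(1)] e by simp
    also have "\<dots> = (v ^ m) ^ s'" using uv(3) by (simp add: power_mult)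
    also have "\<dots> = v ^ (m * s')" by (simp only: power_mult)
    also have "\<dots> = v" using pow_cycle[OF uv(2)] e by simp
    finally show "u = v" .
  qed
qed

lemma F_unit: "u \<in> F \<Longrightarrow> u \<noteq> 0 \<Longrightarrow> u ^ (q - 1) = 1"
proof -
  assume "u \<in> F" "u \<noteq> 0"
  have "u * u ^ (q - 1) = u ^ q" using q_pos by (metis Suc_diff_1 power_Suc)
  hence "u * u ^ (q - 1) = u * 1" using \<open>u \<in> F\<close> by (simp add: F_def)
  thus ?thesis using \<open>u \<noteq> 0\<close> by simp
qed

lemma pow_not_inj:
  assumes r: "prime r" "r dvd m" "r dvd (q - 1)"
  shows "\<not> inj_on (\<lambda>u. u ^ m) F"
proof
  assume inj: "inj_on (\<lambda>u. u ^ m) F"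
  define d where "d = (q - 1) div r"
  have qd: "q - 1 = r * d" using r(3) by (simp add: d_def)
  have r2: "r \<ge> 2" using r(1) prime_ge_2_nat by blast
  have dpos: "d > 0"
  proof (rule ccontr)
    assume "\<not> d > 0" hence "q - 1 = 0" using qd by simp
    thus False using q_ge2 by simp
  qed
  have "1 * d < r * d" using r2 dpos by (intro mult_strict_right_mono) auto
  hence dlt: "d < q - 1" using qd by simp
  have "\<exists>u\<in>F - {0}. u ^ d \<noteq> 1"
  proof (rule ccontr)
    assume "\<not> ?thesis"
    hence sub: "F - {0} \<subseteq> {x. poly (monom 1 d - 1) x = 0}" by (auto simp: poly_monom)
    define P :: "'a poly" where "P = monom 1 d - 1"
    have P0: "P \<noteq> 0"
    proof
      assume "P = 0" hence "poly P 0 = 0" by simp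
      moreover have "poly P 0 = (if d = 0 then 0 else -1)" by (simp add: P_def poly_monom)
      moreover have "d \<noteq> 0" using dpos by simp
      ultimately show False by simp
    qed
    have "degree P \<le> d" unfolding P_def by (intro degree_diff_le) (auto simp: degree_monom_le)
    hence "card {x. poly P x = 0} \<le> d" using card_poly_roots_bound[OF P0] by linarith
    moreover have "card (F - {0}) \<le> card {x. poly P x = 0}"
      using sub by (intro card_mono) (auto simp: P_def)
    moreover have "card (F - {0}) = q - 1" using card_F by simp
    ultimately show False using dlt by linarith
  qed
  then obtain u where u: "u \<in> F" "u \<noteq> 0" "u ^ d \<noteq> 1" by blast
  define z where "z = u ^ d"
  have zF: "z \<in> F" using u by (simp add: z_def F_pow)
  have "z ^ r = u ^ (d * r)" by (simp add: z_def power_mult)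
  also have "d * r = q - 1" using qd by simp
  finally have "z ^ r = 1" using F_unit[OF u(1,2)] by simp
  moreover obtain k where "m = r * k" using r(2) by blast
  ultimately have "z ^ m = 1 ^ m" by (simp add: power_mult)
  hence "z = 1" using inj_onD[OF inj, of z 1] zF by simp
  thus False using u(3) z_def by simp
qed

lemma pow_inj_iff:
  assumes "m > 0"
  shows "inj_on (\<lambda>u. u ^ m) F \<longleftrightarrow> coprime m (q - 1)"
proof
  assume inj: "inj_on (\<lambda>u. u ^ m) F"
  show "coprime m (q - 1)"
  proof (rule ccontr)
    assume "\<not> coprime m (q - 1)"
    hence "gcd m (q - 1) \<noteq> 1" by (simp add: coprime_iff_gcd_eq_1)
    then obtain r where "prime r" "r dvd gcd m (q - 1)" using prime_factor_nat by blast
    thus False using pow_not_inj[of r m] inj by simp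
  qed
qed (rule pow_inj[OF assms])

lemma pow_surj: "inj_on (\<lambda>u. u ^ m) F \<Longrightarrow> (\<lambda>u. u ^ m) ` F = F"
  by (intro endo_inj_surj) (auto simp: F_pow)

lemma G_inj_iff:
  assumes A: "A \<noteq> 0" and B: "B \<noteq> 0" and mn: "m > 0" "n > 0"
  shows "inj_on (\<lambda>(u,v). A * u ^ m + B * v ^ n) (F \<times> F) \<longleftrightarrow>
         coprime m (q - 1) \<and> coprime n (q - 1) \<and> B / A \<notin> F"
proof
  assume inj: "inj_on (\<lambda>(u,v). A * u ^ m + B * v ^ n) (F \<times> F)"
  have im: "inj_on (\<lambda>u. u ^ m) F"
  proof (rule inj_onI)
    fix u u' assume "u \<in> F" "u' \<in> F" "u ^ m = u' ^ m"
    hence "(u, 0) = (u', 0)" using inj_onD[OF inj, of "(u,0)" "(u',0)"] by simp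
    thus "u = u'" by simp
  qed
  have in': "inj_on (\<lambda>v. v ^ n) F"
  proof (rule inj_onI)
    fix v v' assume "v \<in> F" "v' \<in> F" "v ^ n = v' ^ n"
    hence "(0, v) = (0, v')" using inj_onD[OF inj, of "(0,v)" "(0,v')"] by simp
    thus "v = v'" by simp
  qed
  have "B / A \<notin> F"
  proof
    assume "B / A \<in> F"
    then obtain u where u: "u \<in> F" "u ^ m = B / A" using pow_surj[OF im] by (metis imageE)
    have "A * u ^ m + B * 0 ^ n = A * 0 ^ m + B * 1 ^ n" using u A mn by (simp add: zero_power)
    hence "(u, 0::'a) = (0, 1)" using inj_onD[OF inj, of "(u,0)" "(0,1)"] u by simp
    thus False by simp
  qed
  thus "coprime m (q - 1) \<and> coprime n (q - 1) \<and> B / A \<notin> F"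
    using im in' pow_inj_iff mn by blast
next
  assume h: "coprime m (q - 1) \<and> coprime n (q - 1) \<and> B / A \<notin> F"
  have im: "inj_on (\<lambda>u. u ^ m) F" and in': "inj_on (\<lambda>v. v ^ n) F"
    using h pow_inj mn by auto
  show "inj_on (\<lambda>(u,v). A * u ^ m + B * v ^ n) (F \<times> F)"
  proof (rule inj_onI, clarsimp)
    fix u v u' v' assume F: "u \<in> F" "v \<in> F" "u' \<in> F" "v' \<in> F"
      and e: "A * u ^ m + B * v ^ n = A * u' ^ m + B * v' ^ n"
    have vv: "v ^ n = v' ^ n"
    proof (rule ccontr)
      assume ne: "v ^ n \<noteq> v' ^ n"
      have "B * (v ^ n - v' ^ n) = A * (u' ^ m - u ^ m)" using e by (simp add: algebra_simps)
      hence "B / A = (u' ^ m - u ^ m) / (v ^ n - v' ^ n)"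
        using ne A by (simp add: frac_eq_eq mult.commute)
      also have "\<dots> \<in> F" using F by (intro F_div F_diff F_pow)
      finally show False using h by simp
    qed
    hence "v = v'" using in' F by (auto dest: inj_onD)
    moreover have "u ^ m = u' ^ m" using e vv A by simp
    hence "u = u'" using im F by (auto dest: inj_onD)
    ultimately show "u = u' \<and> v = v'" by simp
  qed
qed

end


context pctx begin

lemma psi_eval:
  assumes "a \<in> F" "b \<in> F" and fd: "f = (\<lambda>x. (x + w * x ^ q) ^ m + \<epsilon> * (w * x + x ^ q) ^ n)"
  shows "f (Psi (a, b)) = (-(w^2))^m * (a + b)^m + (\<epsilon> * (w^2)^n) * (2*b - a)^n"
proof -
  have xq: "(a + b * w) ^ q = a + b * w^2"
    using assms(1,2) by (simp add: frob_add power_mult_distrib wq F_def)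
  have w1: "1 + w = - (w^2)" using w_sq by (simp add: eq_neg_iff_add_eq_0 algebra_simps)
  have "w * w^2 = w^3" by (simp add: numeral_3_eq_3 numeral_2_eq_2)
  hence w3': "w * w^2 = 1" using w3 by simp
  have e1: "(a + b * w) + w * (a + b * w^2) = (a + b) * (-(w^2))"
  proof -
    have "(a + b * w) + w * (a + b * w^2) = (a + b) + (a + b) * w"
      using w3' by (simp add: algebra_simps)
    also have "\<dots> = (a + b) * (1 + w)" by (simp add: algebra_simps)
    finally show ?thesis using w1 by simp
  qed
  have e2: "w * (a + b * w) + (a + b * w^2) = (2*b - a) * w^2"
  proof -
    have "w * (a + b * w) + (a + b * w^2) = a * (1 + w) + 2 * b * w^2"
      by (simp add: algebra_simps power2_eq_square)
    also have "\<dots> = (2*b - a) * w^2" using w1 by (simp add: algebra_simps)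
    finally show ?thesis .
  qed
  have "f (Psi (a,b)) = ((a + b*w) + w*(a+b*w)^q)^m + \<epsilon>*(w*(a+b*w) + (a+b*w)^q)^n"
    by (simp add: fd Psi_def)
  also have "\<dots> = ((a+b)*(-(w^2)))^m + \<epsilon>*((2*b-a)*w^2)^n" by (simp only: xq e1 e2)
  also have "\<dots> = (-(w^2))^m * (a + b)^m + (\<epsilon> * (w^2)^n) * (2*b - a)^n"
    by (simp only: power_mult_distrib mult_ac)
  finally show ?thesis .
qed

definition L :: "'a \<times> 'a \<Rightarrow> 'a \<times> 'a" where "L = (\<lambda>(a,b). (a + b, 2*b - a))"

lemma L_inj: "inj_on L (F \<times> F)"
proof (rule inj_onI, clarsimp simp: L_def)
  fix a b a' b' :: 'a assume e1: "a + b = a' + b'" and e2: "2 * b - a = 2 * b' - a'"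
  have "3 * b = (2 * b - a) + (a + b)" by (simp add: algebra_simps)
  also have "\<dots> = (2 * b' - a') + (a' + b')" using e1 e2 by simp
  also have "\<dots> = 3 * b'" by (simp add: algebra_simps)
  finally have "3 * b = 3 * b'" .
  hence "b = b'" using three by simp
  thus "a = a' \<and> b = b'" using e1 by simp
qed

lemma L_surj: "L ` (F \<times> F) = F \<times> F"
proof
  show "L ` (F \<times> F) \<subseteq> F \<times> F"
    by (auto simp: L_def intro!: F_add F_diff F_mult F_2)
  show "F \<times> F \<subseteq> L ` (F \<times> F)"
  proof clarify
    fix u v assume uv: "u \<in> F" "v \<in> F"
    define a where "a = (2*u - v) / 3"
    define b where "b = (u + v) / 3"
    have ab: "a \<in> F" "b \<in> F" unfolding a_def b_def using uv
      by (auto intro!: F_add F_diff F_mult F_div F_2 F_3)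
    have 3: "3 * a = 2*u - v" "3 * b = u + v" using three by (simp_all add: a_def b_def)
    have "3 * (a + b) = 3 * u" using 3 by (simp add: algebra_simps)
    hence "a + b = u" using three by (metis mult_left_cancel)
    moreover have "3 * (2 * b - a) = 3 * v"
    proof -
      have "3 * (2 * b - a) = 2 * (3 * b) - 3 * a" by (simp add: algebra_simps)
      also have "\<dots> = 2 * (u + v) - (2 * u - v)" using 3 by simp
      also have "\<dots> = 3 * v" by (simp add: algebra_simps)
      finally show ?thesis .
    qed
    hence "2 * b - a = v" using three by (metis mult_left_cancel)
    ultimately have "(u, v) = L (a, b)" by (simp add: L_def)
    thus "(u, v) \<in> L ` (F \<times> F)" using ab by blast
  qed
qed

lemma sw_in_F:
  assumes "s \<in> F" "s \<noteq> 0"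
  shows "s * y \<in> F \<longleftrightarrow> y \<in> F"
proof
  assume "s * y \<in> F"
  hence "(s * y) / s \<in> F" using assms by (intro F_div)
  thus "y \<in> F" using assms by simp
qed (use assms in \<open>intro F_mult\<close>)

lemma wm_lemma: "(w^2)^m * w ^ (2 * n + e + m) = w ^ (2*n+e)"
proof -
  have wm1: "(w^2)^m * w ^ (2 * n + e + m) = w ^ (2*m + (2 * n + e + m))"
    by (simp only: power_mult[symmetric] power_add[symmetric])
  have wm2: "2*m + (2 * n + e + m) = (2*n + e) + 3 * m" by simp
  have wm3: "w ^ ((2*n + e) + 3 * m) = w ^ (2*n+e)"
    by (simp only: power_add power_mult w3 power_one mult_1_right)
  have "(w^2)^m * w ^ (2 * n + e + m) = w ^ (2*m + (2 * n + e + m))" by (rule wm1)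
  also have "\<dots> = w ^ ((2*n + e) + 3 * m)" by (simp only: wm2)
  also have "\<dots> = w ^ (2*n+e)" by (rule wm3)
  finally show ?thesis .
qed

lemma mm_lemma: "(-1::'a)^m * (-1)^m = 1"
proof -
  have "(-1::'a)^m * (-1)^m = ((-1)*(-1))^m" by (rule power_mult_distrib[symmetric])
  thus ?thesis by simp
qed

lemma BA_lemma:
  assumes eps: "\<epsilon> = s * w ^ e"
  shows "(\<epsilon> * (w^2)^n) / ((-(w^2))^m) = (s * (-1)^m) * w ^ (2 * n + e + m)"
proof -
  have A0: "(-(w^2))^m \<noteq> 0" using w_ne0 by simp
  have Af: "(-(w^2))^m = (-1)^m * (w^2)^m" by (rule power_minus)
  have w2n: "(w^2)^n = w^(2*n)" by (simp only: power_mult[symmetric])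
  have Bf: "\<epsilon> * (w^2)^n = s * w ^ (2*n + e)" unfolding eps w2n power_add by (simp only: ac_simps)
  have "((s * (-1)^m) * w ^ (2 * n + e + m)) * (-(w^2))^m
      = s * ((-1)^m * (-1)^m) * ((w^2)^m * w ^ (2 * n + e + m))"
    unfolding Af by (simp only: mult_ac)
  also have "\<dots> = \<epsilon> * (w^2)^n" unfolding mm_lemma wm_lemma Bf by simp
  finally show ?thesis using A0 by (simp add: divide_eq_eq)
qed

lemma final:
  assumes sF: "s \<in> F" "s \<noteq> 0" and eps: "\<epsilon> = s * w ^ e" and mn: "m > 0" "n > 0"
    and fd: "f = (\<lambda>x. (x + w * x ^ q) ^ m + \<epsilon> * (w * x + x ^ q) ^ n)"
  shows "bij f \<longleftrightarrow> coprime (m * n) (q - 1) \<and> \<not> 3 dvd (2 * n + e + m)"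
proof -
  define A where "A = (-(w^2))^m"
  define B where "B = \<epsilon> * (w^2)^n"
  define G where "G = (\<lambda>(u,v). A * u ^ m + B * v ^ n)"
  have A0: "A \<noteq> 0" using w_ne0 by (simp add: A_def)
  have B0: "B \<noteq> 0" using w_ne0 sF by (simp add: B_def eps)
  have pw: "(f \<circ> Psi) x = (G \<circ> L) x" if xin: "x \<in> F \<times> F" for x
  proof -
    obtain a b where x: "x = (a, b)" "a \<in> F" "b \<in> F" using xin by blast
    show ?thesis unfolding x(1) comp_def G_def L_def A_def B_def
      using psi_eval[OF x(2) x(3) fd] by simp
  qed
  have "bij f \<longleftrightarrow> inj f"
    using finite_UNIV_inj_surj[of f] by (auto simp: bij_def)
  also have "inj f \<longleftrightarrow> inj_on f (Psi ` (F \<times> F))" using Psi_surj by simp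
  also have "\<dots> \<longleftrightarrow> inj_on (f \<circ> Psi) (F \<times> F)" by (rule comp_inj_on_iff[OF Psi_inj])
  also have "\<dots> \<longleftrightarrow> inj_on (G \<circ> L) (F \<times> F)"
    by (rule inj_on_cong) (rule pw)
  also have "\<dots> \<longleftrightarrow> inj_on G (L ` (F \<times> F))" by (rule comp_inj_on_iff[OF L_inj, symmetric])
  also have "\<dots> \<longleftrightarrow> inj_on G (F \<times> F)" using L_surj by simp
  also have "\<dots> \<longleftrightarrow> coprime m (q - 1) \<and> coprime n (q - 1) \<and> B / A \<notin> F"
    unfolding G_def by (rule G_inj_iff[OF A0 B0 mn])
  finally have c1: "bij f \<longleftrightarrow> coprime m (q - 1) \<and> coprime n (q - 1) \<and> B / A \<notin> F" .
  have c2: "B / A \<in> F \<longleftrightarrow> 3 dvd (2 * n + e + m)"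
  proof -
    have "B / A = (s * (-1)^m) * w ^ (2 * n + e + m)"
      unfolding A_def B_def by (rule BA_lemma[OF eps])
    moreover have "s * (-1)^m \<in> F" using sF by (intro F_mult F_pow F_neg) auto
    moreover have "s * (-1)^m \<noteq> 0" using sF by simp
    ultimately show ?thesis using sw_in_F w_in_F_iff by simp
  qed
  show ?thesis using c1 c2 coprime_mult_left_iff[of m n "q - 1"] by blast
qed

end

lemma field_finite_power_card:
  fixes x :: "'a :: {field,finite}"
  shows "x ^ card (UNIV :: 'a set) = x"
proof (cases "x = 0")
  case False
  have "x * (\<Prod>y\<in>UNIV-{0}. x * y) = x * x ^ (card (UNIV :: 'a set) - 1) * \<Prod>(UNIV-{0})"
    by (simp add: prod.distrib mult_ac)
  also have "x * x ^ (card (UNIV :: 'a set) - 1) = x ^ Suc (card (UNIV :: 'a set) - 1)"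
    by (subst power_Suc) auto
  also have "Suc (card (UNIV :: 'a set) - 1) = card (UNIV :: 'a set)"
    using finite_UNIV_card_ge_0[where ?'a = 'a] by simp
  also have "(\<Prod>y\<in>UNIV-{0}. x * y) = (\<Prod>y\<in>UNIV-{0}. y)"
    by (rule prod.reindex_bij_witness[of _ "\<lambda>y. y / x" "\<lambda>y. x * y"]) (use False in auto)
  finally show ?thesis
    by simp
qed (use finite_UNIV_card_ge_0[where ?'a = 'a] in auto)

theorem proposition3p6:
  fixes q m n :: nat and \<omega> \<epsilon> :: "'a::{field,finite}" and f :: "'a \<Rightarrow> 'a"
  assumes q_pp: "\<exists>p k. prime p \<and> k > 0 \<and> q = p ^ k"
    and q_mod: "q mod 3 = 2"
    and card: "card (UNIV :: 'a set) = q ^ 2"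
    and m_pos: "m > 0" and n_pos: "n > 0"
    and \<omega>_ord: "\<omega> ^ 3 = 1" "\<omega> \<noteq> 1"
    and \<epsilon>_in: "\<epsilon> \<in> subfield_q_star q \<union> {\<omega>, -\<omega>, \<omega>^2, -(\<omega>^2)}"
    and f_def: "f = (\<lambda>x. (x + \<omega> * x ^ q) ^ m + \<epsilon> * (\<omega> * x + x ^ q) ^ n)"
  shows "(\<epsilon> \<in> subfield_q_star q \<longrightarrow>
            (permutes_field f \<longleftrightarrow> gcd (m * n) (q - 1) = 1 \<and> \<not> (3::int) dvd (int m - int n)))
       \<and> (\<epsilon> \<in> {\<omega>, -\<omega>} \<longrightarrow>
            (permutes_field f \<longleftrightarrow> gcd (m * n) (q - 1) = 1 \<and> \<not> (3::int) dvd (1 + int m - int n)))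
       \<and> (\<epsilon> \<in> {\<omega>^2, -(\<omega>^2)} \<longrightarrow>
            (permutes_field f \<longleftrightarrow> gcd (m * n) (q - 1) = 1 \<and> \<not> (3::int) dvd (2 + int m - int n)))"
proof -
  obtain p k where pk: "prime p" "k > 0" "q = p ^ k" using q_pp by blast
  have fin: "finite (UNIV :: 'a set)" by simp
  have cpos: "CHAR('a) > 0" by (rule finite_imp_CHAR_pos[OF fin])
  have cprime: "prime CHAR('a)" by (rule prime_CHAR_semidom[OF cpos])
  have "CHAR('a) dvd card (UNIV :: 'a set)" by (rule CHAR_dvd_CARD)
  hence "CHAR('a) dvd p ^ (k * 2)" using card pk(3) by (simp add: power_mult)
  hence "CHAR('a) dvd p" using prime_dvd_power cprime by blast
  hence cp: "CHAR('a) = p" using primes_dvd_imp_eq cprime pk(1) by blast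
  have frob: "(x + y) ^ q = x ^ q + y ^ q" for x y :: 'a
    using freshmans_dream'[OF cprime, of q k] cp pk(3) by simp
  have frob2: "(x ^ q) ^ q = x" for x :: 'a
  proof -
    have "(x ^ q) ^ q = x ^ card (UNIV :: 'a set)" using card by (simp add: power_mult[symmetric] power2_eq_square)
    thus ?thesis using field_finite_power_card by simp
  qed
  have three: "(3::'a) \<noteq> 0"
  proof
    assume "(3::'a) = 0"
    hence "of_nat 3 = (0::'a)" by simp
    hence "p dvd 3" using cp of_nat_eq_0_iff_char_dvd by metis
    hence "p \<le> 3" by (simp add: dvd_imp_le)
    moreover have "p \<ge> 2" using pk(1) prime_ge_2_nat by blast
    moreover have "p \<noteq> 2" using \<open>p dvd 3\<close> by auto
    ultimately have "p = 3" by simp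
    hence "q mod 3 = 0" using pk(2,3) by (simp add: power_mod)
    thus False using q_mod by simp
  qed
  interpret P: pctx q \<omega>
    by unfold_locales (use frob frob2 q_mod \<omega>_ord three card in auto)
  have pf: "permutes_field f = bij f" by (simp add: permutes_field_def)
  have gc: "gcd (m * n) (q - 1) = 1 \<longleftrightarrow> coprime (m * n) (q - 1)" by (simp add: coprime_iff_gcd_eq_1)
  have m1F: "(-1::'a) \<in> P.F" by (intro P.F_neg P.F_1)
  have r1: "permutes_field f \<longleftrightarrow> gcd (m * n) (q - 1) = 1 \<and> \<not> (3::int) dvd (int m - int n)"
    if "\<epsilon> \<in> subfield_q_star q"
  proof -
    have "\<epsilon> \<in> P.F" "\<epsilon> \<noteq> 0" using that by (auto simp: subfield_q_star_def P.F_def)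
    moreover have "\<epsilon> = \<epsilon> * \<omega> ^ 0" by simp
    ultimately have "bij f \<longleftrightarrow> coprime (m * n) (q - 1) \<and> \<not> 3 dvd (2 * n + 0 + m)"
      using P.final[of \<epsilon> \<epsilon> 0 m n f] m_pos n_pos f_def by blast
    moreover have "3 dvd (2 * n + 0 + m) \<longleftrightarrow> (3::int) dvd (int m - int n)" by presburger
    ultimately show ?thesis using pf gc by simp
  qed
  have r2: "permutes_field f \<longleftrightarrow> gcd (m * n) (q - 1) = 1 \<and> \<not> (3::int) dvd (1 + int m - int n)"
    if "\<epsilon> \<in> {\<omega>, -\<omega>}"
  proof -
    have "\<exists>s. s \<in> P.F \<and> s \<noteq> 0 \<and> \<epsilon> = s * \<omega> ^ 1"
    proof (cases "\<epsilon> = \<omega>")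
      case True thus ?thesis using P.F_1 by (intro exI[of _ 1]) simp
    next
      case False hence "\<epsilon> = -(\<omega>)" using that by simp
      thus ?thesis using m1F by (intro exI[of _ "-1"]) simp
    qed
    then obtain s where s: "s \<in> P.F" "s \<noteq> 0" "\<epsilon> = s * \<omega> ^ 1" by blast
    hence "bij f \<longleftrightarrow> coprime (m * n) (q - 1) \<and> \<not> 3 dvd (2 * n + 1 + m)"
      using P.final[of s \<epsilon> 1 m n f] m_pos n_pos f_def by blast
    moreover have "3 dvd (2 * n + 1 + m) \<longleftrightarrow> (3::int) dvd (1 + int m - int n)" by presburger
    ultimately show ?thesis using pf gc by simp
  qed
  have r3: "permutes_field f \<longleftrightarrow> gcd (m * n) (q - 1) = 1 \<and> \<not> (3::int) dvd (2 + int m - int n)"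
    if "\<epsilon> \<in> {\<omega>^2, -(\<omega>^2)}"
  proof -
    have "\<exists>s. s \<in> P.F \<and> s \<noteq> 0 \<and> \<epsilon> = s * \<omega> ^ 2"
    proof (cases "\<epsilon> = \<omega>^2")
      case True thus ?thesis using P.F_1 by (intro exI[of _ 1]) simp
    next
      case False hence "\<epsilon> = -(\<omega>^2)" using that by simp
      thus ?thesis using m1F by (intro exI[of _ "-1"]) simp
    qed
    then obtain s where s: "s \<in> P.F" "s \<noteq> 0" "\<epsilon> = s * \<omega> ^ 2" by blast
    hence "bij f \<longleftrightarrow> coprime (m * n) (q - 1) \<and> \<not> 3 dvd (2 * n + 2 + m)"
      using P.final[of s \<epsilon> 2 m n f] m_pos n_pos f_def by blast
    moreover have "3 dvd (2 * n + 2 + m) \<longleftrightarrow> (3::int) dvd (2 + int m - int n)" by presburger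
    ultimately show ?thesis using pf gc by simp
  qed
  show ?thesis using r1 r2 r3 by blast
qed

end
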